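(* Let $0<\nu<1$ and let $R,S,T,U>0$ satisfy \[ T=-\tfrac{1}{3}(\nu+1)R+\frac{R^2}{R+S}+\tfrac12,\qquad U=\tfrac16\Big(2S\big(\nu-\tfrac{3R}{R+S}+1\big)+3\Big). \] For $\theta\in\mathbb{R}$ let \[ A(\theta)=\begin{pmatrix} 1-\nu\big(1+(1-\nu)(U-T)\big)(1-e^{-I\theta}) & \nu(1-\nu)(Ue^{-I\theta}-T)(1-e^{-I\theta})\\ \nu(1-\nu)(R+S) & (1-\nu)(1-\nu R)+\nu\big(1-(1-\nu)S\big)e^{-I\theta} \end{pmatrix}, \] where $I$ is the imaginary unit, and let $\lambda_1(\theta)$ be the eigenvalue of $A(\theta)$ depending analytically on $\theta$ near $0$ with $\lambda_1(0)=1$. Then \[ \lambda_1(\theta)-e^{-I\nu\theta}=\frac{1}{72}(\nu-1)\nu\Big((\nu-2)(\nu+1)+\frac{18}{R+S}\Big)\theta^4+O(\theta^5)\quad(\theta\to0). \]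
   Context: $A(\theta)$ is the amplification matrix, acting on Fourier amplitudes $(\hat Q,\hat q)$ of cell averages and interface point values, of the following parameterized Active Flux scheme for $q_t+aq_x=0$, $a>0$, on a uniform grid with cells $[x_{i-1/2},x_{i+1/2}]$ of width $\Delta x$ and Courant number $\nu=a\Delta t/\Delta x$: $q^{n+1}_{i+1/2}=(1-\nu)q^n_{i+1/2}+\nu q^n_{i-1/2}-\nu(1-\nu)\big(R(q^n_{i+1/2}-Q^n_i)-S(Q^n_i-q^n_{i-1/2})\big)$, $\bar q_{i+1/2}=Q^n_i+(1-\nu)\big(T(q^n_{i+1/2}-Q^n_i)+U(Q^n_i-q^n_{i-1/2})\big)$, $Q^{n+1}_i=Q^n_i-\nu(\bar q_{i+1/2}-\bar q_{i-1/2})$. The exact amplification factor is $e^{-I\nu\theta}$. At $\theta=0$ the two eigenvalues of $A$ are $1$ and $1-\nu(1-\nu)(R+S)\neq1$, so $\lambda_1$ is well defined near $\theta=0$. *)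

theory Defs
  imports "HOL-Analysis.Analysis" "HOL-Library.Landau_Symbols"
begin

definition AF_matrix :: "real \<Rightarrow> real \<Rightarrow> real \<Rightarrow> real \<Rightarrow> real \<Rightarrow> complex \<Rightarrow> complex^2^2" where
  "AF_matrix \<nu> R S T U \<theta> =
    (let z = exp (- \<i> * \<theta>); n = complex_of_real \<nu> in
     vector [vector [1 - n * (1 + (1 - n) * (of_real U - of_real T)) * (1 - z),
                     n * (1 - n) * (of_real U * z - of_real T) * (1 - z)],
             vector [n * (1 - n) * (of_real R + of_real S),
                     (1 - n) * (1 - n * of_real R) + n * (1 - (1 - n) * of_real S) * z]])"

definition is_eigenvalue :: "complex^'n^'n \<Rightarrow> complex \<Rightarrow> bool" where
  "is_eigenvalue M k \<longleftrightarrow> (\<exists>v. v \<noteq> 0 \<and> M *v v = k *s v)"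

end

theory Submission
  imports Defs
begin


definition HI :: "complex \<Rightarrow> complex \<Rightarrow> complex \<Rightarrow> complex \<Rightarrow> complex \<Rightarrow> complex" where
  "HI n t1 d2 c y = 144*d2 - 576*t1*c + 1152*n*c - 24*n*t1 - 48*n^2*t1 - 48*n^3*t1 - 24*n^4*t1 + 144*n^5 + 40*y*d2 - 288*y*t1*c + 576*y*n^2*c - 12*y*n^2*t1 - 16*y*n^3*t1 - 12*y*n^4*t1 + 40*y*n^6 + 8*y^2*d2 - 96*y^2*t1*c + 192*y^2*n^3*c - 4*y^2*n^3*t1 - 4*y^2*n^4*t1 + 8*y^2*n^7 + 576*y^3*c^2 + 1*y^3*d2 - 24*y^3*t1*c + 48*y^3*n^4*c - 1*y^3*n^4*t1 + 1*y^3*n^8"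

lemma expand_int:
  fixes y n t0 t1 d0 d1 d2 c :: complex
  shows "(24 + 24*n*y + 12*(n*y)^2 + 4*(n*y)^3 + (n*y)^4 + 24*c*y^4)^2
     - (24*t0 + t1*(24 + 24*y + 12*y^2 + 4*y^3 + y^4)) * (24 + 24*n*y + 12*(n*y)^2 + 4*(n*y)^3 + (n*y)^4 + 24*c*y^4)
     + 576*d0 + 24*d1*(24 + 24*y + 12*y^2 + 4*y^3 + y^4) + d2*(24 + 24*y + 12*y^2 + 4*y^3 + y^4)^2
   = (576 + 576*d2 + 576*d1 + 576*d0 - 576*t1 - 576*t0)*y^0 + (1152*d2 + 576*d1 - 576*t1 + 1152*n - 576*n*t1 - 576*n*t0)*y^1 + (1152*d2 + 288*d1 - 288*t1 - 576*n*t1 + 1152*n^2 - 288*n^2*t1 - 288*n^2*t0)*y^2 + (768*d2 + 96*d1 - 96*t1 - 288*n*t1 - 288*n^2*t1 + 768*n^3 - 96*n^3*t1 - 96*n^3*t0)*y^3 + (1152*c + 384*d2 + 24*d1 - 24*t1 - 576*t1*c - 576*t0*c - 96*n*t1 - 144*n^2*t1 - 96*n^3*t1 + 384*n^4 - 24*n^4*t1 - 24*n^4*t0)*y^4 + y^5 * HI n t1 d2 c y"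
  unfolding HI_def by algebra

lemma coeffs:
  fixes n R S T U W t0 t1 d0 d1 d2 c :: complex
  assumes W: "(R + S) * W = 1"
    and TT: "6 * T = - 2 * (n + 1) * R + 6 * R^2 * W + 3"
    and UU: "6 * U = 2 * S * (n - 3 * R * W + 1) + 3"
    and cc: "72 * c = (n - 1) * n * ((n - 2) * (n + 1) + 18 * W)"
    and t0: "t0 = 1 - n * (1 + (1 - n) * (U - T)) + (1 - n) * (1 - n * R)"
    and t1: "t1 = n * (1 + (1 - n) * (U - T)) + n * (1 - (1 - n) * S)"
    and d0: "d0 = (1 - n * (1 + (1 - n) * (U - T))) * ((1 - n) * (1 - n * R)) + n*(1-n)*T * (n*(1-n)*(R+S))"
    and d1: "d1 = (1 - n * (1 + (1 - n) * (U - T))) * (n * (1 - (1 - n) * S)) + n * (1 + (1 - n) * (U - T)) * ((1 - n) * (1 - n * R)) - n*(1-n)*(U+T) * (n*(1-n)*(R+S))"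
    and d2: "d2 = n * (1 + (1 - n) * (U - T)) * (n * (1 - (1 - n) * S)) + n*(1-n)*U * (n*(1-n)*(R+S))"
  shows "576 + 576*d2 + 576*d1 + 576*d0 - 576*t1 - 576*t0 = 0" "1152*d2 + 576*d1 - 576*t1 + 1152*n - 576*n*t1 - 576*n*t0 = 0" "1152*d2 + 288*d1 - 288*t1 - 576*n*t1 + 1152*n^2 - 288*n^2*t1 - 288*n^2*t0 = 0" "768*d2 + 96*d1 - 96*t1 - 288*n*t1 - 288*n^2*t1 + 768*n^3 - 96*n^3*t1 - 96*n^3*t0 = 0" "1152*c + 384*d2 + 24*d1 - 24*t1 - 576*t1*c - 576*t0*c - 96*n*t1 - 144*n^2*t1 - 96*n^3*t1 + 384*n^4 - 24*n^4*t1 - 24*n^4*t0 = 0"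
  using W TT UU cc unfolding t0 t1 d0 d1 d2 
  by algebra+

lemma ppZG:
  fixes y n t0 t1 d0 d1 d2 c Z G :: complex
  assumes hZ: "24*Z = 24 + 24*y + 12*y^2 + 4*y^3 + y^4"
    and hG: "24*G = 24 + 24*n*y + 12*(n*y)^2 + 4*(n*y)^3 + (n*y)^4 + 24*c*y^4"
    and c0: "576 + 576*d2 + 576*d1 + 576*d0 - 576*t1 - 576*t0 = 0" and c1: "1152*d2 + 576*d1 - 576*t1 + 1152*n - 576*n*t1 - 576*n*t0 = 0" and c2: "1152*d2 + 288*d1 - 288*t1 - 576*n*t1 + 1152*n^2 - 288*n^2*t1 - 288*n^2*t0 = 0"
    and c3: "768*d2 + 96*d1 - 96*t1 - 288*n*t1 - 288*n^2*t1 + 768*n^3 - 96*n^3*t1 - 96*n^3*t0 = 0" and c4: "1152*c + 384*d2 + 24*d1 - 24*t1 - 576*t1*c - 576*t0*c - 96*n*t1 - 144*n^2*t1 - 96*n^3*t1 + 384*n^4 - 24*n^4*t1 - 24*n^4*t0 = 0"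
  shows "576*(G^2 - (t0+t1*Z)*G + d0 + d1*Z + d2*Z^2) = y^5 * HI n t1 d2 c y"
proof -
  have "576*(G^2 - (t0+t1*Z)*G + d0 + d1*Z + d2*Z^2) = (24*G)^2 - (24*t0 + t1*(24*Z))*(24*G) + 576*d0 + 24*d1*(24*Z) + d2*(24*Z)^2"
    by algebra
  also have "\<dots> = y^5 * HI n t1 d2 c y"
    unfolding hZ hG expand_int c0 c1 c2 c3 c4 by simp
  finally show ?thesis .
qed



lemma charpoly2:
  fixes M :: "complex^2^2"
  assumes "v \<noteq> 0" "M *v v = k *s v"
  shows "(M$1$1 - k) * (M$2$2 - k) - M$1$2 * M$2$1 = 0"
proof -
  have "(M *v v)$1 = (k *s v)$1" "(M *v v)$2 = (k *s v)$2" using assms by simp_all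
  hence e1: "M$1$1 * v$1 + M$1$2 * v$2 = k * v$1" and e2: "M$2$1 * v$1 + M$2$2 * v$2 = k * v$2"
    by (simp_all add: matrix_vector_mult_def sum_2)
  have "v$1 \<noteq> 0 \<or> v$2 \<noteq> 0" using assms(1) by (auto simp: vec_eq_iff forall_2)
  moreover have "((M$1$1 - k) * (M$2$2 - k) - M$1$2 * M$2$1) * v$1 = 0"
  proof -
    have "((M$1$1 - k) * (M$2$2 - k) - M$1$2 * M$2$1) * v$1
      = (M$2$2 - k) * (M$1$1 * v$1 + M$1$2 * v$2 - k * v$1) - M$1$2 * (M$2$1 * v$1 + M$2$2 * v$2 - k* v$2)"
      by (simp add: algebra_simps)
    thus ?thesis using e1 e2 by simp
  qed
  moreover have "((M$1$1 - k) * (M$2$2 - k) - M$1$2 * M$2$1) * v$2 = 0"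
  proof -
    have "((M$1$1 - k) * (M$2$2 - k) - M$1$2 * M$2$1) * v$2
      = (M$1$1 - k) * (M$2$1 * v$1 + M$2$2 * v$2 - k* v$2) - M$2$1 * (M$1$1 * v$1 + M$1$2 * v$2 - k * v$1)"
      by (simp add: algebra_simps)
    thus ?thesis using e1 e2 by simp
  qed
  ultimately show ?thesis by auto
qed

lemma AF_entries:
  "AF_matrix \<nu> R S T U x $1$1 = 1 - of_real \<nu> * (1 + (1 - of_real \<nu>) * (of_real U - of_real T)) * (1 - exp (- \<i> * x))"
  "AF_matrix \<nu> R S T U x $1$2 = of_real \<nu> * (1 - of_real \<nu>) * (of_real U * exp (- \<i> * x) - of_real T) * (1 - exp (- \<i> * x))"
  "AF_matrix \<nu> R S T U x $2$1 = of_real \<nu> * (1 - of_real \<nu>) * (of_real R + of_real S)"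
  "AF_matrix \<nu> R S T U x $2$2 = (1 - of_real \<nu>) * (1 - of_real \<nu> * of_real R) + of_real \<nu> * (1 - (1 - of_real \<nu>) * of_real S) * exp (- \<i> * x)"
  by (simp_all add: AF_matrix_def Let_def)

lemma isCont_bigo1:
  fixes f :: "real \<Rightarrow> complex"
  assumes "isCont f a" shows "f \<in> O[at a](\<lambda>_. 1)"
  using assms unfolding isCont_def by (intro bigoI_tendsto[where c="f a"]) auto

lemma exp_taylor4:
  fixes w :: complex assumes "Re w = 0"
  shows "norm (exp w - (1 + w + w^2/2 + w^3/6 + w^4/24)) \<le> norm w ^ 5 / 24"
proof -
  have s: "(\<Sum>k\<le>4. w ^ k / fact k) = 1 + w + w^2/2 + w^3/6 + w^4/24"
    by (simp add: eval_nat_numeral fact_numeral)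
  show ?thesis using Taylor_exp[of w 4] assms unfolding s by (simp add: fact_numeral)
qed



lemma tendsto_bigo1:
  fixes f :: "real \<Rightarrow> complex"
  assumes "(f \<longlongrightarrow> c) F" shows "f \<in> O[F](\<lambda>_. 1)"
  using assms by (intro bigoI_tendsto[where c=c]) auto

lemma bigo_mult1:
  fixes f g :: "real \<Rightarrow> complex"
  shows "f \<in> O[F](h) \<Longrightarrow> g \<in> O[F](\<lambda>_. 1) \<Longrightarrow> (\<lambda>x. f x * g x) \<in> O[F](h)"
  using landau_o.big.mult[of f F h g "\<lambda>_. 1"] by simp

theorem mainTheorem1:
  fixes \<nu> R S T U r :: real and lam :: "complex \<Rightarrow> complex"
  assumes "0 < \<nu>" "\<nu> < 1" "R > 0" "S > 0" "T > 0" "U > 0"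
    and "T = - (1/3) * (\<nu> + 1) * R + R^2 / (R + S) + 1/2"
    and "U = (1/6) * (2 * S * (\<nu> - 3 * R / (R + S) + 1) + 3)"
    and "r > 0" and "lam holomorphic_on ball 0 r"
    and "\<forall>\<theta>::real. \<bar>\<theta>\<bar> < r \<longrightarrow> is_eigenvalue (AF_matrix \<nu> R S T U (of_real \<theta>)) (lam (of_real \<theta>))"
    and "lam 0 = 1"
  shows "(\<lambda>\<theta>::real. lam (of_real \<theta>) - exp (- \<i> * of_real \<nu> * of_real \<theta>)
            - of_real ((1/72) * (\<nu> - 1) * \<nu> * ((\<nu> - 2) * (\<nu> + 1) + 18 / (R + S)) * \<theta>^4))
         \<in> O[at 0](\<lambda>\<theta>::real. (of_real \<theta> :: complex)^5)"
proof -
  define n where "n = complex_of_real \<nu>"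
  define Rc where "Rc = complex_of_real R"
  define Sc where "Sc = complex_of_real S"
  define Tc where "Tc = complex_of_real T"
  define Uc where "Uc = complex_of_real U"
  define W where "W = complex_of_real (1/(R+S))"
  define cr where "cr = (1/72) * (\<nu> - 1) * \<nu> * ((\<nu> - 2) * (\<nu> + 1) + 18 / (R + S))"
  define c where "c = complex_of_real cr"
  define t0 where "t0 = 1 - n * (1 + (1 - n) * (Uc - Tc)) + (1 - n) * (1 - n * Rc)"
  define t1 where "t1 = n * (1 + (1 - n) * (Uc - Tc)) + n * (1 - (1 - n) * Sc)"
  define d0 where "d0 = (1 - n * (1 + (1 - n) * (Uc - Tc))) * ((1 - n) * (1 - n * Rc)) + n*(1-n)*Tc * (n*(1-n)*(Rc+Sc))"
  define d1 where "d1 = (1 - n * (1 + (1 - n) * (Uc - Tc))) * (n * (1 - (1 - n) * Sc)) + n * (1 + (1 - n) * (Uc - Tc)) * ((1 - n) * (1 - n * Rc)) - n*(1-n)*(Uc+Tc) * (n*(1-n)*(Rc+Sc))"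
  define d2 where "d2 = n * (1 + (1 - n) * (Uc - Tc)) * (n * (1 - (1 - n) * Sc)) + n*(1-n)*Uc * (n*(1-n)*(Rc+Sc))"
  define yv where "yv = (\<lambda>\<theta>::real. - \<i> * complex_of_real \<theta>)"
  define Zf where "Zf = (\<lambda>\<theta>. exp (yv \<theta>))"
  define Ef where "Ef = (\<lambda>\<theta>. exp (n * yv \<theta>))"
  define Z0 where "Z0 = (\<lambda>\<theta>. 1 + yv \<theta> + yv \<theta>^2/2 + yv \<theta>^3/6 + yv \<theta>^4/24)"
  define E0 where "E0 = (\<lambda>\<theta>. 1 + n * yv \<theta> + (n * yv \<theta>)^2/2 + (n * yv \<theta>)^3/6 + (n * yv \<theta>)^4/24)"
  define G0 where "G0 = (\<lambda>\<theta>. E0 \<theta> + c * yv \<theta>^4)"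
  define g where "g = (\<lambda>\<theta>. Ef \<theta> + c * yv \<theta>^4)"
  define pp where "pp = (\<lambda>z w. w^2 - (t0+t1*z)*w + d0 + d1*z + d2*z^2)"
  define lamr where "lamr = (\<lambda>\<theta>::real. lam (complex_of_real \<theta>))"
  define D where "D = (\<lambda>\<theta>. lamr \<theta> + g \<theta> - (t0 + t1 * Zf \<theta>))"
  define K1 where "K1 = (\<lambda>\<theta>. d1 + d2*(Zf \<theta> + Z0 \<theta>) - t1*G0 \<theta>)"
  define K2 where "K2 = (\<lambda>\<theta>. g \<theta> + G0 \<theta> - t0 - t1*Zf \<theta>)"

  have RS: "R + S > 0" using assms by simp
  have Wc: "(Rc + Sc) * W = 1"
  proof -
    have "Rc + Sc = complex_of_real (R+S)" unfolding Rc_def Sc_def by simp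
    hence "(Rc+Sc)*W = complex_of_real ((R+S) * (1/(R+S)))" unfolding W_def by (simp only: of_real_mult)
    thus ?thesis using RS by simp
  qed
  have TT: "6 * Tc = - 2 * (n + 1) * Rc + 6 * Rc^2 * W + 3"
  proof -
    have "6 * T = - 2 * (\<nu> + 1) * R + 6 * R^2 * (1/(R+S)) + 3" using RS unfolding assms(7) by (simp add: field_simps)
    hence "complex_of_real (6 * T) = complex_of_real (- 2 * (\<nu> + 1) * R + 6 * R^2 * (1/(R+S)) + 3)" by simp
    thus ?thesis unfolding Tc_def n_def Rc_def W_def by simp
  qed
  have UU: "6 * Uc = 2 * Sc * (n - 3 * Rc * W + 1) + 3"
  proof -
    have "6 * U = 2 * S * (\<nu> - 3 * R * (1/(R+S)) + 1) + 3" using RS unfolding assms(8) by (simp add: field_simps)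
    hence "complex_of_real (6 * U) = complex_of_real (2 * S * (\<nu> - 3 * R * (1/(R+S)) + 1) + 3)" by simp
    thus ?thesis unfolding Uc_def n_def Rc_def Sc_def W_def by simp
  qed
  have cc: "72 * c = (n - 1) * n * ((n - 2) * (n + 1) + 18 * W)"
  proof -
    have "72 * cr = (\<nu> - 1) * \<nu> * ((\<nu> - 2) * (\<nu> + 1) + 18 * (1/(R+S)))" using RS unfolding cr_def by (simp add: field_simps)
    hence "complex_of_real (72 * cr) = complex_of_real ((\<nu> - 1) * \<nu> * ((\<nu> - 2) * (\<nu> + 1) + 18 * (1/(R+S))))" by simp
    thus ?thesis unfolding c_def n_def W_def by simp
  qed
  note C = coeffs[OF Wc TT UU cc t0_def t1_def d0_def d1_def d2_def]

  have ppZG0: "576 * pp (Z0 \<theta>) (G0 \<theta>) = yv \<theta>^5 * HI n t1 d2 c (yv \<theta>)" for \<theta>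
  proof -
    have hZ: "24 * Z0 \<theta> = 24 + 24*yv \<theta> + 12*yv \<theta>^2 + 4*yv \<theta>^3 + yv \<theta>^4"
      unfolding Z0_def by (simp add: field_simps)
    have hG: "24 * G0 \<theta> = 24 + 24*n*yv \<theta> + 12*(n*yv \<theta>)^2 + 4*(n*yv \<theta>)^3 + (n*yv \<theta>)^4 + 24*c*yv \<theta>^4"
      unfolding G0_def E0_def by (simp add: field_simps)
    show ?thesis unfolding pp_def using ppZG[OF hZ hG C] .
  qed
  have decomp: "pp (Zf \<theta>) (g \<theta>) = pp (Z0 \<theta>) (G0 \<theta>) + (Zf \<theta> - Z0 \<theta>) * K1 \<theta> + (Ef \<theta> - E0 \<theta>) * K2 \<theta>" for \<theta>
    unfolding pp_def K1_def K2_def g_def G0_def by algebra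
  have pp_split: "pp (Zf \<theta>) (g \<theta>) = yv \<theta>^5 * (HI n t1 d2 c (yv \<theta>) / 576) + (Zf \<theta> - Z0 \<theta>) * K1 \<theta> + (Ef \<theta> - E0 \<theta>) * K2 \<theta>" for \<theta>
  proof -
    have "pp (Z0 \<theta>) (G0 \<theta>) = yv \<theta>^5 * (HI n t1 d2 c (yv \<theta>) / 576)"
      using ppZG0[of \<theta>] by (simp add: field_simps)
    thus ?thesis using decomp[of \<theta>] by simp
  qed

  have L1: "(\<lambda>\<theta>. Zf \<theta> - Z0 \<theta>) \<in> O[at 0](\<lambda>\<theta>::real. (complex_of_real \<theta>)^5)"
  proof (rule bigoI[where c="1/24"], rule always_eventually, rule allI)
    fix \<theta> :: real
    have "Re (yv \<theta>) = 0" unfolding yv_def by simp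
    from exp_taylor4[OF this] have "norm (Zf \<theta> - Z0 \<theta>) \<le> norm (yv \<theta>)^5/24" unfolding Zf_def Z0_def .
    moreover have "norm (yv \<theta>) = norm (complex_of_real \<theta>)" unfolding yv_def by (simp add: norm_mult)
    ultimately show "norm (Zf \<theta> - Z0 \<theta>) \<le> 1/24 * norm ((complex_of_real \<theta>)^5)" by (simp add: norm_power)
  qed
  have L2: "(\<lambda>\<theta>. Ef \<theta> - E0 \<theta>) \<in> O[at 0](\<lambda>\<theta>::real. (complex_of_real \<theta>)^5)"
  proof (rule bigoI[where c="\<nu>^5/24"], rule always_eventually, rule allI)
    fix \<theta> :: real
    have "Re (n * yv \<theta>) = 0" unfolding yv_def n_def by simp
    from exp_taylor4[OF this] have "norm (Ef \<theta> - E0 \<theta>) \<le> norm (n * yv \<theta>)^5/24" unfolding Ef_def E0_def .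
    moreover have "norm (n * yv \<theta>) = \<nu> * norm (complex_of_real \<theta>)" unfolding yv_def n_def using assms(1) by (simp add: norm_mult)
    ultimately show "norm (Ef \<theta> - E0 \<theta>) \<le> \<nu>^5/24 * norm ((complex_of_real \<theta>)^5)" by (simp add: norm_power power_mult_distrib)
  qed
  have L4: "(\<lambda>\<theta>. yv \<theta>^5) \<in> O[at 0](\<lambda>\<theta>::real. (complex_of_real \<theta>)^5)"
    by (rule bigoI[where c=1]) (simp add: yv_def norm_mult norm_power)
  have cK1: "isCont K1 0" unfolding K1_def Zf_def Z0_def G0_def E0_def yv_def by (auto intro!: continuous_intros)
  have cK2: "isCont K2 0" unfolding K2_def g_def Ef_def Zf_def G0_def E0_def yv_def by (auto intro!: continuous_intros)
  have cH: "isCont (\<lambda>\<theta>. HI n t1 d2 c (yv \<theta>) / 576) 0" unfolding HI_def yv_def by (auto intro!: continuous_intros)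
  have PPO: "(\<lambda>\<theta>. pp (Zf \<theta>) (g \<theta>)) \<in> O[at 0](\<lambda>\<theta>::real. (complex_of_real \<theta>)^5)"
    unfolding pp_split
    by (intro sum_in_bigo(1) bigo_mult1 L1 L2 L4 isCont_bigo1 cK1 cK2 cH)

  have clam: "isCont lam 0"
    using holomorphic_on_imp_continuous_on[OF assms(10)] continuous_on_interior[of "ball 0 r" lam 0] assms(9) by simp
  have "((\<lambda>\<theta>::real. complex_of_real \<theta>) \<longlongrightarrow> complex_of_real 0) (at 0)"
    by (intro tendsto_of_real tendsto_ident_at)
  hence "((\<lambda>\<theta>::real. complex_of_real \<theta>) \<longlongrightarrow> 0) (at 0)" by simp
  from isCont_tendsto_compose[OF clam this] have lim_lamr: "(lamr \<longlongrightarrow> 1) (at 0)"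
    unfolding lamr_def using assms(12) by simp
  have "isCont g 0" unfolding g_def Ef_def yv_def by (auto intro!: continuous_intros)
  hence lg: "(g \<longlongrightarrow> 1) (at 0)" unfolding isCont_def by (simp add: g_def Ef_def yv_def)
  have "isCont Zf 0" unfolding Zf_def yv_def by (auto intro!: continuous_intros)
  hence lZ: "(Zf \<longlongrightarrow> 1) (at 0)" unfolding isCont_def by (simp add: Zf_def yv_def)
  have limD0: "(D \<longlongrightarrow> 1 + 1 - (t0 + t1 * 1)) (at 0)" unfolding D_def
    by (intro tendsto_intros lim_lamr lg lZ)
  have D0: "1 + 1 - (t0 + t1 * 1) = n*(1-n)*(Rc+Sc)" unfolding t0_def t1_def by algebra
  have D0ne: "n*(1-n)*(Rc+Sc) \<noteq> 0"
  proof -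
    have "\<nu>*(1-\<nu>)*(R+S) \<noteq> 0" using assms RS by simp
    hence "complex_of_real (\<nu>*(1-\<nu>)*(R+S)) \<noteq> 0" using of_real_eq_0_iff by blast
    thus ?thesis unfolding n_def Rc_def Sc_def by (simp only: of_real_mult of_real_diff of_real_1 of_real_add)+
  qed
  have limD: "(D \<longlongrightarrow> n*(1-n)*(Rc+Sc)) (at 0)" using limD0 D0 by simp
  have evD: "eventually (\<lambda>\<theta>. D \<theta> \<noteq> 0) (at 0)" using tendsto_imp_eventually_ne[OF limD D0ne] .
  have "((\<lambda>\<theta>. -(1 / D \<theta>)) \<longlongrightarrow> -(1 / (n*(1-n)*(Rc+Sc)))) (at 0)"
    by (intro tendsto_intros limD D0ne)
  hence invO: "(\<lambda>\<theta>. -(1 / D \<theta>)) \<in> O[at 0](\<lambda>_. 1)" by (rule tendsto_bigo1)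
  have "((\<lambda>\<theta>::real. \<bar>\<theta>\<bar>) \<longlongrightarrow> \<bar>0\<bar>) (at 0)" by (intro tendsto_rabs tendsto_ident_at)
  hence "((\<lambda>\<theta>::real. \<bar>\<theta>\<bar>) \<longlongrightarrow> 0) (at 0)" by simp
  from order_tendstoD(2)[OF this assms(9)] have evr: "eventually (\<lambda>\<theta>::real. \<bar>\<theta>\<bar> < r) (at 0)" .

  have ppchar: "pp z k = (1 - n * (1 + (1 - n) * (Uc - Tc)) * (1 - z) - k) * ((1 - n) * (1 - n * Rc) + n * (1 - (1 - n) * Sc) * z - k) - n * (1 - n) * (Uc * z - Tc) * (1 - z) * (n * (1 - n) * (Rc + Sc))" for z k
    unfolding pp_def t0_def t1_def d0_def d1_def d2_def by algebra
  have ppdiff: "pp z a - pp z b = (a - b) * (a + b - (t0 + t1 * z))" for z a b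
    unfolding pp_def by algebra
  have i4: "(- \<i>)^4 = (1::complex)" by (simp add: power4_eq_xxxx)

  have key: "eventually (\<lambda>\<theta>. lam (of_real \<theta>) - exp (- \<i> * of_real \<nu> * of_real \<theta>)
            - of_real ((1/72) * (\<nu> - 1) * \<nu> * ((\<nu> - 2) * (\<nu> + 1) + 18 / (R + S)) * \<theta>^4)
       = pp (Zf \<theta>) (g \<theta>) * (-(1 / D \<theta>))) (at 0)"
    using evD evr
  proof eventually_elim
    case (elim \<theta>)
    from assms(11) elim(2) obtain v where v: "v \<noteq> 0"
      "AF_matrix \<nu> R S T U (of_real \<theta>) *v v = lam (of_real \<theta>) *s v"
      unfolding is_eigenvalue_def by blast
    have ch: "(AF_matrix \<nu> R S T U (of_real \<theta>)$1$1 - lam (of_real \<theta>)) * (AF_matrix \<nu> R S T U (of_real \<theta>)$2$2 - lam (of_real \<theta>)) - AF_matrix \<nu> R S T U (of_real \<theta>)$1$2 * AF_matrix \<nu> R S T U (of_real \<theta>)$2$1 = 0"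
      by (rule charpoly2[OF v])
    have ez: "exp (- \<i> * complex_of_real \<theta>) = Zf \<theta>" by (simp add: Zf_def yv_def)
    have pl: "pp (Zf \<theta>) (lamr \<theta>) = 0"
      using ch unfolding AF_entries ez ppchar lamr_def n_def Rc_def Sc_def Tc_def Uc_def .
    have "(lamr \<theta> - g \<theta>) * D \<theta> = - pp (Zf \<theta>) (g \<theta>)"
      using ppdiff[of "Zf \<theta>" "lamr \<theta>" "g \<theta>"] pl unfolding D_def by simp
    hence e1: "lamr \<theta> - g \<theta> = pp (Zf \<theta>) (g \<theta>) * (-(1 / D \<theta>))" using elim(1)
      by (simp add: field_simps)
    have e2: "exp (- \<i> * of_real \<nu> * of_real \<theta>) = Ef \<theta>"
      unfolding Ef_def yv_def n_def by (simp add: algebra_simps)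
    have e3: "complex_of_real ((1/72) * (\<nu> - 1) * \<nu> * ((\<nu> - 2) * (\<nu> + 1) + 18 / (R + S)) * \<theta>^4) = c * yv \<theta>^4"
    proof -
      have "complex_of_real ((1/72) * (\<nu> - 1) * \<nu> * ((\<nu> - 2) * (\<nu> + 1) + 18 / (R + S)) * \<theta>^4) = c * complex_of_real \<theta> ^ 4"
        unfolding c_def cr_def by simp
      also have "\<dots> = c * yv \<theta>^4" unfolding yv_def power_mult_distrib i4 by simp
      finally show ?thesis .
    qed
    show ?case using e1 unfolding e2 e3 lamr_def g_def by (simp add: algebra_simps)
  qed
  have "(\<lambda>\<theta>. pp (Zf \<theta>) (g \<theta>) * (-(1 / D \<theta>))) \<in> O[at 0](\<lambda>\<theta>::real. (complex_of_real \<theta>)^5)"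
    by (rule bigo_mult1[OF PPO invO])
  thus ?thesis using landau_o.big.in_cong[OF key] by simp
qed
end
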